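(* Let $n,M\ge1$ be integers, $\mathcal X=\{x^{(1)},\dots,x^{(L)}\}\subset\mathbb C$ a set of $L$ channel input symbols, $\sigma^2>0$, $g:\mathbb C\to[0,+\infty]$ measurable, $\epsilon>0$, $B,\delta\in\mathbb R$. Let $\mathscr C$ be a homogeneous $(n,M,\epsilon,B,\delta)$-code (as defined in the context), let $p_\ell=\int_{\mathcal E_\ell}f_{Y|X}(y|x^{(\ell)})dy$ for $\ell=1,\dots,L$, assume $\sum_jp_j>0$, and let $Q(x^{(\ell)})=p_\ell/\sum_{j=1}^Lp_j$. Then $$\epsilon\ge1-\exp\Big(-nH(P_{\mathscr C})-nD(P_{\mathscr C}\|Q)+n\log\sum_{j=1}^Lp_j\Big).$$
   Context: Channel: outputs $\boldsymbol Y=\boldsymbol x+\boldsymbol N_1$, $\boldsymbol Z=\boldsymbol x+\boldsymbol N_2$, all noise components i.i.d. complex circularly symmetric Gaussian with real and imaginary parts of zero mean and variance $\sigma^2/2$; $f_{Y|X}(y|x)=\frac1{\pi\sigma^2}\exp(-|y-x|^2/\sigma^2)$, $f_{\boldsymbol Y|\boldsymbol X}(\boldsymbol y|\boldsymbol x)=\prod_tf_{Y|X}(y_t|x_t)$ (same for $\boldsymbol Z$). An $(n,M)$-code is $\mathscr C=\{(\boldsymbol u(i),\mathcal D_i)\}_{i=1}^M$ with $\boldsymbol u(i)\in\mathcal X^n$, $|u_t(i)|\le P$ for a fixed $P>0$, pairwise disjoint measurable $\mathcal D_i\subseteq\mathbb C^n$, $M\le2^{n\lfloor\log_2L\rfloor}$;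 decoding sets are of product form $\mathcal D_i=\mathcal D_{i,1}\times\cdots\times\mathcal D_{i,n}$, $\mathcal D_{i,t}\subseteq\mathbb C$ measurable. $\gamma_i(\mathscr C)=1-\int_{\mathcal D_i}f_{\boldsymbol Y|\boldsymbol X}(\boldsymbol y|\boldsymbol u(i))d\boldsymbol y$, $\gamma=\frac1M\sum_i\gamma_i$; $(n,M,\epsilon)$-code: $\gamma<\epsilon$. With $\bar g(\boldsymbol z)=\frac1n\sum_tg(z_t)$, $\theta_i=\Pr[\bar g(\boldsymbol Z)<B\mid\boldsymbol X=\boldsymbol u(i)]$, $\theta=\frac1M\sum_i\theta_i$; $(n,M,\epsilon,B,\delta)$-code: $(n,M,\epsilon)$-code with $\theta<\delta$. Types: $P_{\boldsymbol u(i)}(x^{(\ell)})=\frac1n\#\{t:u_t(i)=x^{(\ell)}\}$, $P_{\mathscr C}=\frac1M\sum_iP_{\boldsymbol u(i)}$. For each $\ell$, $\mathcal E_\ell=\mathcal D_{i^\star,t^\star}$ where $(i^\star,t^\star)$ minimizes $\int_{\mathcal D_{i,t}}f_{Y|X}(y|x^{(\ell)})dy$ over $\{1,\dots,M\}\times\{1,\dots,n\}$. The code is homogeneous if $P_{\boldsymbol u(i)}=P_{\mathscr C}$ for every $i$, and $\mathcal D_{i,t}=\mathcal E_\ell$ whenever $u_t(i)=x^{(\ell)}$. $H$ is entropy and $D(P\|Q)=\sum_xP(x)\log\frac{P(x)}{Q(x)}$ relative entropy, with natural logarithms. *)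

theory Defs
  imports "HOL-Probability.Probability"
begin

definition fYX :: "real \<Rightarrow> complex \<Rightarrow> complex \<Rightarrow> real" where
  "fYX s2 y x = exp (- ((cmod (y - x)) ^ 2) / s2) / (pi * s2)"

definition chan :: "real \<Rightarrow> complex \<Rightarrow> complex measure" where
  "chan s2 x = density lborel (\<lambda>y. ennreal (fYX s2 y x))"

definition out :: "real \<Rightarrow> nat \<Rightarrow> (nat \<Rightarrow> complex) \<Rightarrow> (nat \<Rightarrow> complex) measure" where
  "out s2 n c = PiM {1..n} (\<lambda>t. chan s2 (c t))"

text \<open>Codewords u i t (i in 1..M, t in 1..n), decoding sets D i = Pi_E {1..n} (D i).\<close>
definition nM_code :: "nat \<Rightarrow> (nat \<Rightarrow> complex) \<Rightarrow> real \<Rightarrow> nat \<Rightarrow> nat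
    \<Rightarrow> (nat \<Rightarrow> nat \<Rightarrow> complex) \<Rightarrow> (nat \<Rightarrow> nat \<Rightarrow> complex set) \<Rightarrow> bool" where
  "nM_code L xs Pw n M u D \<longleftrightarrow>
     (\<forall>i\<in>{1..M}. \<forall>t\<in>{1..n}. u i t \<in> xs ` {1..L} \<and> cmod (u i t) \<le> Pw) \<and>
     (\<forall>i\<in>{1..M}. \<forall>t\<in>{1..n}. D i t \<in> sets lborel) \<and>
     (\<forall>i\<in>{1..M}. \<forall>j\<in>{1..M}. i \<noteq> j \<longrightarrow> PiE {1..n} (D i) \<inter> PiE {1..n} (D j) = {}) \<and>
     M \<le> 2 ^ (n * nat \<lfloor>log 2 (real L)\<rfloor>)"

definition gamma_i :: "real \<Rightarrow> nat \<Rightarrow> (nat \<Rightarrow> nat \<Rightarrow> complex) \<Rightarrow> (nat \<Rightarrow> nat \<Rightarrow> complex set) \<Rightarrow> nat \<Rightarrow> real" where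
  "gamma_i s2 n u D i = 1 - measure (out s2 n (u i)) (PiE {1..n} (D i))"

definition gamma :: "real \<Rightarrow> nat \<Rightarrow> nat \<Rightarrow> (nat \<Rightarrow> nat \<Rightarrow> complex) \<Rightarrow> (nat \<Rightarrow> nat \<Rightarrow> complex set) \<Rightarrow> real" where
  "gamma s2 n M u D = (\<Sum>i\<in>{1..M}. gamma_i s2 n u D i) / real M"

definition gbar :: "(complex \<Rightarrow> ereal) \<Rightarrow> nat \<Rightarrow> (nat \<Rightarrow> complex) \<Rightarrow> ereal" where
  "gbar g n z = (\<Sum>t\<in>{1..n}. g (z t)) / ereal (real n)"

definition theta_i :: "real \<Rightarrow> nat \<Rightarrow> (complex \<Rightarrow> ereal) \<Rightarrow> real \<Rightarrow> (nat \<Rightarrow> nat \<Rightarrow> complex) \<Rightarrow> nat \<Rightarrow> real" where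
  "theta_i s2 n g B u i =
     measure (out s2 n (u i)) {z \<in> space (out s2 n (u i)). gbar g n z < ereal B}"

definition theta :: "real \<Rightarrow> nat \<Rightarrow> nat \<Rightarrow> (complex \<Rightarrow> ereal) \<Rightarrow> real \<Rightarrow> (nat \<Rightarrow> nat \<Rightarrow> complex) \<Rightarrow> real" where
  "theta s2 n M g B u = (\<Sum>i\<in>{1..M}. theta_i s2 n g B u i) / real M"

definition word_type :: "nat \<Rightarrow> (nat \<Rightarrow> complex) \<Rightarrow> (nat \<Rightarrow> complex) \<Rightarrow> nat \<Rightarrow> real" where
  "word_type n xs w l = real (card {t\<in>{1..n}. w t = xs l}) / real n"

definition code_type :: "nat \<Rightarrow> nat \<Rightarrow> (nat \<Rightarrow> complex) \<Rightarrow> (nat \<Rightarrow> nat \<Rightarrow> complex) \<Rightarrow> nat \<Rightarrow> real" where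
  "code_type n M xs u l = (\<Sum>i\<in>{1..M}. word_type n xs (u i) l) / real M"

definition is_E_choice :: "real \<Rightarrow> nat \<Rightarrow> nat \<Rightarrow> (nat \<Rightarrow> nat \<Rightarrow> complex set) \<Rightarrow> complex \<Rightarrow> complex set \<Rightarrow> bool" where
  "is_E_choice s2 n M D x E \<longleftrightarrow>
     (\<exists>i\<in>{1..M}. \<exists>t\<in>{1..n}. E = D i t \<and>
        (\<forall>i'\<in>{1..M}. \<forall>t'\<in>{1..n}. measure (chan s2 x) (D i t) \<le> measure (chan s2 x) (D i' t')))"

definition homogeneous :: "nat \<Rightarrow> nat \<Rightarrow> nat \<Rightarrow> (nat \<Rightarrow> complex) \<Rightarrow> (nat \<Rightarrow> nat \<Rightarrow> complex)
    \<Rightarrow> (nat \<Rightarrow> nat \<Rightarrow> complex set) \<Rightarrow> (nat \<Rightarrow> complex set) \<Rightarrow> bool" where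
  "homogeneous L n M xs u D E \<longleftrightarrow>
     (\<forall>i\<in>{1..M}. \<forall>l\<in>{1..L}. word_type n xs (u i) l = code_type n M xs u l) \<and>
     (\<forall>i\<in>{1..M}. \<forall>t\<in>{1..n}. \<forall>l\<in>{1..L}. u i t = xs l \<longrightarrow> D i t = E l)"

definition entropy_fin :: "nat set \<Rightarrow> (nat \<Rightarrow> real) \<Rightarrow> real" where
  "entropy_fin A P = - (\<Sum>l\<in>A. if P l = 0 then 0 else P l * ln (P l))"

definition kl_div :: "nat set \<Rightarrow> (nat \<Rightarrow> real) \<Rightarrow> (nat \<Rightarrow> real) \<Rightarrow> ereal" where
  "kl_div A P Q = (if \<exists>l\<in>A. P l > 0 \<and> Q l = 0 then \<infinity>
     else ereal (\<Sum>l\<in>A. if P l = 0 then 0 else P l * ln (P l / Q l)))"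

definition exp_ereal :: "ereal \<Rightarrow> ereal" where
  "exp_ereal x = (case x of ereal r \<Rightarrow> ereal (exp r) | PInfty \<Rightarrow> \<infinity> | MInfty \<Rightarrow> 0)"

end

theory Submission
  imports Defs
begin

lemma chan_sf: "sigma_finite_measure (chan s2 x)"
  unfolding chan_def
  by (subst sigma_finite_measure.sigma_finite_iff_density_finite[OF sigma_finite_lborel]) (auto simp: fYX_def)

lemma sets_chan[simp]: "sets (chan s2 x) = sets borel"
  by (simp add: chan_def)

lemma enn2real_prod: "enn2real (\<Prod>i\<in>A. f i) = (\<Prod>i\<in>A. enn2real (f i))"
  by (induct A rule: infinite_finite_induct) (auto simp: enn2real_mult)

lemma measure_out:
  assumes "\<And>t. t \<in> {1..n} \<Longrightarrow> D t \<in> sets borel"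
  shows "measure (out s2 n c) (PiE {1..n} D) = (\<Prod>t\<in>{1..n}. measure (chan s2 (c t)) (D t))"
proof -
  interpret product_sigma_finite "\<lambda>t. chan s2 (c t)"
    by (simp add: product_sigma_finite_def chan_sf)
  show ?thesis
    unfolding out_def measure_def
    by (subst emeasure_PiM) (auto simp: assms enn2real_prod)
qed

lemma prod_group:
  fixes g :: "nat \<Rightarrow> real"
  assumes "finite S" "finite A" "h ` S \<subseteq> A"
  shows "(\<Prod>t\<in>S. g (h t)) = (\<Prod>l\<in>A. g l ^ card {t\<in>S. h t = l})"
proof -
  have z: "\<And>l. l \<notin> h ` S \<Longrightarrow> card {t\<in>S. h t = l} = 0"
  proof -
    fix l assume "l \<notin> h ` S"
    then have "{t\<in>S. h t = l} = {}" by auto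
    then show "card {t\<in>S. h t = l} = 0" by (simp only: card.empty)
  qed
  have "(\<Prod>t\<in>S. g (h t)) = (\<Prod>l\<in>h ` S. (\<Prod>t\<in>{t\<in>S. h t = l}. g (h t)))"
    by (rule prod.image_gen[OF assms(1)])
  also have "\<dots> = (\<Prod>l\<in>h ` S. g l ^ card {t\<in>S. h t = l})"
    by (rule prod.cong) auto
  also have "\<dots> = (\<Prod>l\<in>A. g l ^ card {t\<in>S. h t = l})"
    by (rule prod.mono_neutral_left[OF assms(2) assms(3)]) (metis DiffD2 power_0 z)
  finally show ?thesis .
qed

lemma card_group:
  assumes "finite S" "finite A" "h ` S \<subseteq> A"
  shows "card S = (\<Sum>l\<in>A. card {t\<in>S. h t = l})"
proof -
  have z: "\<And>l. l \<notin> h ` S \<Longrightarrow> card {t\<in>S. h t = l} = 0"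
  proof -
    fix l assume "l \<notin> h ` S"
    then have "{t\<in>S. h t = l} = {}" by auto
    then show "card {t\<in>S. h t = l} = 0" by (simp only: card.empty)
  qed
  have "card S = (\<Sum>t\<in>S. 1)" by simp
  also have "\<dots> = (\<Sum>l\<in>h ` S. (\<Sum>t\<in>{t\<in>S. h t = l}. 1))"
    by (rule sum.image_gen[OF assms(1)])
  also have "\<dots> = (\<Sum>l\<in>h ` S. card {t\<in>S. h t = l})"
    by simp
  also have "\<dots> = (\<Sum>l\<in>A. card {t\<in>S. h t = l})"
    by (rule sum.mono_neutral_left[OF assms(2) assms(3)]) (metis DiffD2 z)
  finally show ?thesis .
qed

theorem corollary2:
  fixes n M L :: nat and xs :: "nat \<Rightarrow> complex" and s2 Pw \<epsilon> B \<delta> :: real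
    and g :: "complex \<Rightarrow> ereal"
    and u :: "nat \<Rightarrow> nat \<Rightarrow> complex" and D :: "nat \<Rightarrow> nat \<Rightarrow> complex set"
    and E :: "nat \<Rightarrow> complex set"
  assumes n_pos: "n \<ge> 1" and M_pos: "M \<ge> 1"
    and alphabet: "inj_on xs {1..L}"
    and s2_pos: "s2 > 0" and Pw_pos: "Pw > 0"
    and g_meas: "g \<in> borel_measurable borel" and g_nonneg: "\<forall>z. g z \<ge> 0"
    and eps_pos: "\<epsilon> > 0"
    and code: "nM_code L xs Pw n M u D"
    and gamma_lt: "gamma s2 n M u D < \<epsilon>"
    and theta_lt: "theta s2 n M g B u < \<delta>"
    and E_def: "\<forall>l\<in>{1..L}. is_E_choice s2 n M D (xs l) (E l)"
    and homog: "homogeneous L n M xs u D E"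
  defines "p \<equiv> \<lambda>l. measure (chan s2 (xs l)) (E l)"
  defines "S \<equiv> (\<Sum>j\<in>{1..L}. p j)"
  defines "Q \<equiv> \<lambda>l. p l / S"
  defines "PC \<equiv> code_type n M xs u"
  assumes S_pos: "S > 0"
  shows "ereal \<epsilon> \<ge> 1 - exp_ereal (ereal (- real n * entropy_fin {1..L} PC + real n * ln S)
                                    - ereal (real n) * kl_div {1..L} PC Q)"
proof -
  have xsL: "\<forall>i\<in>{1..M}. \<forall>t\<in>{1..n}. u i t \<in> xs ` {1..L}"
   and Dm: "\<forall>i\<in>{1..M}. \<forall>t\<in>{1..n}. D i t \<in> sets lborel"
    using code unfolding nM_code_def by auto
  define h where "h i t = inv_into {1..L} xs (u i t)" for i t
  have h1: "h i t \<in> {1..L}" "xs (h i t) = u i t" if "i \<in> {1..M}" "t \<in> {1..n}" for i t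
    proof -
    have "u i t \<in> xs ` {1..L}" using xsL that by blast
    then show "h i t \<in> {1..L}" "xs (h i t) = u i t" unfolding h_def
      by (simp_all only: inv_into_into f_inv_into_f)
  qed
  have hset: "{t\<in>{1..n}. h i t = l} = {t\<in>{1..n}. u i t = xs l}"
    if "i \<in> {1..M}" "l \<in> {1..L}" for i l
  proof (intro Collect_cong conj_cong refl iffI)
    fix t assume "t \<in> {1..n}" "h i t = l" then show "u i t = xs l" using h1 that by metis
  next
    fix t assume "t \<in> {1..n}" "u i t = xs l" then show "h i t = l"
      using that alphabet unfolding h_def by (metis inv_into_f_f)
  qed
  define cnt where "cnt i l = card {t\<in>{1..n}. u i t = xs l}" for i l
  have cntPC: "real (cnt i l) = real n * PC l" if "i \<in> {1..M}" "l \<in> {1..L}" for i l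
    using homog that n_pos unfolding homogeneous_def PC_def word_type_def cnt_def
    by (auto simp: field_simps)
  define c where "c l = cnt 1 l" for l
  have cnt_c: "cnt i l = c l" if "i \<in> {1..M}" "l \<in> {1..L}" for i l
    using cntPC[OF that] cntPC[of 1 l] that M_pos unfolding c_def by (metis atLeastAtMost_iff le_refl of_nat_eq_iff)
  have p_nonneg: "p l \<ge> 0" for l unfolding p_def by simp
  define R where "R = (\<Prod>l\<in>{1..L}. p l ^ c l)"
  have succ: "measure (out s2 n (u i)) (PiE {1..n} (D i)) = R" if i: "i \<in> {1..M}" for i
  proof -
    have "measure (out s2 n (u i)) (PiE {1..n} (D i)) = (\<Prod>t\<in>{1..n}. measure (chan s2 (u i t)) (D i t))"
      using Dm i by (intro measure_out) auto
    also have "\<dots> = (\<Prod>t\<in>{1..n}. p (h i t))"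
    proof (rule prod.cong[OF refl])
      fix t assume t: "t \<in> {1..n}"
      have "D i t = E (h i t)" using homog h1[OF i t] i t unfolding homogeneous_def by metis
      then show "measure (chan s2 (u i t)) (D i t) = p (h i t)" unfolding p_def using h1[OF i t] by simp
    qed
    also have "\<dots> = (\<Prod>l\<in>{1..L}. p l ^ card {t\<in>{1..n}. h i t = l})"
      using h1[OF i] by (intro prod_group) auto
    also have "\<dots> = R" unfolding R_def
    proof (intro prod.cong refl)
      fix l assume l: "l \<in> {1..L}"
      have "card {t\<in>{1..n}. h i t = l} = c l"
        using hset[OF i l] cnt_c[OF i l] unfolding cnt_def by simp
      then show "p l ^ card {t\<in>{1..n}. h i t = l} = p l ^ c l" by simp
    qed
    finally show ?thesis .
  qed
  have gam: "gamma s2 n M u D = 1 - R"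
    using succ M_pos unfolding gamma_def gamma_i_def by (simp add: field_simps)
  have sumc: "(\<Sum>l\<in>{1..L}. c l) = n"
  proof -
    have "n = card {1..n}" by simp
    also have "\<dots> = (\<Sum>l\<in>{1..L}. card {t\<in>{1..n}. h 1 t = l})"
      using h1[of 1] M_pos by (intro card_group) auto
    also have "\<dots> = (\<Sum>l\<in>{1..L}. c l)"
      using hset[of 1] M_pos unfolding c_def cnt_def by (intro sum.cong) auto
    finally show ?thesis by simp
  qed
  have PCc: "PC l = real (c l) / real n" if "l \<in> {1..L}" for l
    using cntPC[of 1 l] that M_pos n_pos unfolding c_def by (auto simp: field_simps)
  have sumPC: "(\<Sum>l\<in>{1..L}. PC l) = 1"
    using sumc n_pos by (simp add: PCc sum_divide_distrib[symmetric] flip: of_nat_sum)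
  show ?thesis
  proof (cases "\<exists>l\<in>{1..L}. PC l > 0 \<and> Q l = 0")
    case True
    then obtain l where l: "l \<in> {1..L}" "PC l > 0" "Q l = 0" by blast
    have "p l = 0" using l S_pos unfolding Q_def by simp
    moreover have "c l > 0" using l PCc by (auto intro: gr0I)
    ultimately have "R = 0" unfolding R_def using l by (intro prod_zero) auto
    moreover have "kl_div {1..L} PC Q = \<infinity>" using True unfolding kl_div_def by auto
    ultimately show ?thesis using gam gamma_lt n_pos by (simp add: exp_ereal_def)
  next
    case False
    have pos: "p l > 0" if "l \<in> {1..L}" "PC l \<noteq> 0" for l
    proof -
      have "PC l > 0" using that PCc by auto
      then have "Q l \<noteq> 0" using False that by auto
      then show ?thesis using p_nonneg[of l] unfolding Q_def by (auto simp: less_le)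
    qed
    define K where "K = (\<Sum>l\<in>{1..L}. if PC l = 0 then 0 else PC l * ln (PC l / Q l))"
    have kl: "kl_div {1..L} PC Q = ereal K" using False unfolding kl_div_def K_def by auto
    have Keq: "K = (\<Sum>l\<in>{1..L}. if PC l = 0 then 0 else PC l * ln (PC l)) - (\<Sum>l\<in>{1..L}. if PC l = 0 then 0 else PC l * ln (p l)) + (\<Sum>l\<in>{1..L}. PC l) * ln S"
      unfolding K_def sum_subtractf[symmetric] sum_distrib_right sum.distrib[symmetric]
    proof (intro sum.cong refl)
      fix l assume l: "l \<in> {1..L}"
      show "(if PC l = 0 then 0 else PC l * ln (PC l / Q l)) = (if PC l = 0 then 0 else PC l * ln (PC l)) - (if PC l = 0 then 0 else PC l * ln (p l)) + PC l * ln S"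
      proof (cases "PC l = 0")
        case False
        have "PC l > 0" using False PCc l by auto
        then show ?thesis using pos[OF l False] S_pos False unfolding Q_def
          by (simp add: ln_div ln_mult algebra_simps)
      qed simp
    qed
    have Kex: "- real n * entropy_fin {1..L} PC + real n * ln S - real n * K
        = real n * (\<Sum>l\<in>{1..L}. if PC l = 0 then 0 else PC l * ln (p l))"
      unfolding entropy_fin_def Keq sumPC by (simp add: algebra_simps)
    have "exp (real n * (\<Sum>l\<in>{1..L}. if PC l = 0 then 0 else PC l * ln (p l))) = R"
    proof -
      have "exp (real n * (\<Sum>l\<in>{1..L}. if PC l = 0 then 0 else PC l * ln (p l)))
          = (\<Prod>l\<in>{1..L}. exp (real n * (if PC l = 0 then 0 else PC l * ln (p l))))"
        by (simp only: sum_distrib_left exp_sum finite_atLeastAtMost)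
      also have "\<dots> = R" unfolding R_def
      proof (intro prod.cong refl)
        fix l assume l: "l \<in> {1..L}"
        show "exp (real n * (if PC l = 0 then 0 else PC l * ln (p l))) = p l ^ c l"
        proof (cases "PC l = 0")
          case True
          then have "c l = 0" using PCc[OF l] n_pos by auto
          then show ?thesis using True by simp
        next
          case False
          have "real n * PC l = real (c l)" using PCc[OF l] n_pos by simp
          then show ?thesis
          proof -
            have "exp (real (c l) * ln (p l)) = p l powr real (c l)"
              using pos[OF l False] by (simp add: powr_def)
            also have "\<dots> = p l ^ c l" using pos[OF l False] by (simp add: powr_realpow)
            finally show ?thesis using False \<open>real n * PC l = real (c l)\<close>
              by (simp add: mult.assoc[symmetric])
          qed
        qed
      qed
      finally show ?thesis .
    qed
    then have "exp (- real n * entropy_fin {1..L} PC + real n * ln S - real n * K) = R"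
      using Kex by simp
    moreover have "1 - ereal R = ereal (1 - R)" by (simp add: one_ereal_def)
    ultimately show ?thesis using kl gam gamma_lt by (simp add: exp_ereal_def)
  qed
qed

end
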